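(* Consider a one-site PTM cascade with $n\ge1$ layers, with all rate constants and the total amounts $\overline{F}_i,\overline{S}_i$ ($i=1,\dots,n$) positive and fixed. Let $r(s)=f_0(s)+f_1^Y(s)$, written in reduced form $r=r_1/r_2$ with $r_1,r_2\in\mathbb{R}[s]$ (these depend only on the rate constants and on $\overline{F}_i,\overline{S}_i$, not on $\overline{E}$). Let $\sigma_n=\beta_0$ be the smallest positive real zero of $r_2$. Then $r$ is continuous and strictly increasing on $[0,\sigma_n)$, with $r(0)=0$ and $r(s)\to+\infty$ as $s\to\sigma_n^-$, and for every $\overline{E}>0$ the BMSS value of $S_n^1$ is the unique $s\in[0,\sigma_n)$ with $r(s)=\overline{E}$. Thus the stimulus-response map $\overline{E}\mapsto S_n^1$ is the inverse of $r|_{[0,\sigma_n)}$.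
   Context: A one-site PTM cascade with $n$ layers has species $E=S_0^1$ and, for $i=1,\dots,n$, $S_i^0,S_i^1,F_i,Y_i^0,Y_i^1$, with reactions $S_{i-1}^1+S_i^0 \rightleftharpoons Y_i^0 \to S_{i-1}^1+S_i^1$ (rate constants $a_i^0,b_i^0,c_i^0$) and $F_i+S_i^1\rightleftharpoons Y_i^1\to F_i+S_i^0$ (rate constants $a_i^1,b_i^1,c_i^1$), all positive, mass-action kinetics. Put $\delta_i=a_i^1/(b_i^1+c_i^1)$, $\gamma_i=(c_i^1/c_i^0)\delta_i$, $\lambda_i=\frac{b_i^0+c_i^0}{a_i^0}\gamma_i$. Given total amounts $\overline{E},\overline{F}_i,\overline{S}_i$, a steady state is a real solution of: $Y_i^0=\gamma_iF_iS_i^1$, $Y_i^1=\delta_iF_iS_i^1$, $\lambda_iF_iS_i^1=S_i^0S_{i-1}^1$, $\overline{F}_i=F_i+Y_i^1$, $\overline{S}_i=S_i^0+S_i^1+Y_i^0+Y_i^1+Y_{i+1}^0$ ($i=1,\dots,n$, $Y_{n+1}^0:=0$), $\overline{E}=E+Y_1^0$. A BMSS is a steady state with positive total amounts and all concentrations nonnegative. Define $d_i(x,y)=(\overline{S}_i-y)-x-\overline{F}_i(\delta_i+\gamma_i)x+\delta_i(\overline{S}_i-y)x-\delta_ix^2$ and $g_i^Y(x)=\frac{\gamma_i\overline{F}_ix}{1+\delta_ix}$; define rational functions of $s$ recursively by $f_n(s)=s$, $f_{n+1}^Y(s)=0$, and for $i=n,\dots,1$: $f_i^Y(s)=g_i^Y(f_i(s))$,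 $f_{i-1}(s)=\frac{\lambda_i\overline{F}_if_i(s)}{d_i(f_i(s),f_{i+1}^Y(s))}$. $\beta_0$ denotes the smallest positive singularity of $f_0$. *)

theory Defs
  imports "HOL-Analysis.Analysis" "HOL-Computational_Algebra.Computational_Algebra"
    "HOL-Computational_Algebra.Normalized_Fraction" "HOL-Computational_Algebra.Field_as_Ring"
begin

text \<open>Rate constants and totals are indexed
  by the layer i (meaningful for i = 1..n):
  a0 i = a_i^0, b0 i = b_i^0, c0 i = c_i^0, a1 i = a_i^1, b1 i = b_i^1, c1 i = c_i^1,
  Fb i = total F_i, Sb i = total S_i.\<close>

definition delta :: "(nat \<Rightarrow> real) \<Rightarrow> (nat \<Rightarrow> real) \<Rightarrow> (nat \<Rightarrow> real) \<Rightarrow> nat \<Rightarrow> real" where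
  "delta a1 b1 c1 i = a1 i / (b1 i + c1 i)"

definition gamma :: "(nat \<Rightarrow> real) \<Rightarrow> (nat \<Rightarrow> real) \<Rightarrow> (nat \<Rightarrow> real) \<Rightarrow> (nat \<Rightarrow> real) \<Rightarrow> nat \<Rightarrow> real" where
  "gamma c0 a1 b1 c1 i = (c1 i / c0 i) * delta a1 b1 c1 i"

definition lambda :: "(nat \<Rightarrow> real) \<Rightarrow> (nat \<Rightarrow> real) \<Rightarrow> (nat \<Rightarrow> real) \<Rightarrow> (nat \<Rightarrow> real) \<Rightarrow> (nat \<Rightarrow> real) \<Rightarrow> (nat \<Rightarrow> real) \<Rightarrow> nat \<Rightarrow> real" where
  "lambda a0 b0 c0 a1 b1 c1 i = ((b0 i + c0 i) / a0 i) * gamma c0 a1 b1 c1 i"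

type_synonym ratfun = "real poly fract"

definition rconst :: "real \<Rightarrow> ratfun" where
  "rconst c = Fract [:c:] 1"

definition rvar :: ratfun where
  "rvar = Fract [:0, 1:] 1"

text \<open>d_i(x,y) and g_i^Y(x) over rational functions, with delta_i = dl, gamma_i = gm.\<close>
definition dfun :: "real \<Rightarrow> real \<Rightarrow> real \<Rightarrow> real \<Rightarrow> ratfun \<Rightarrow> ratfun \<Rightarrow> ratfun" where
  "dfun Sbi Fbi dl gm x y =
     (rconst Sbi - y) - x - rconst Fbi * (rconst dl + rconst gm) * x
     + rconst dl * (rconst Sbi - y) * x - rconst dl * x ^ 2"

definition gYfun :: "real \<Rightarrow> real \<Rightarrow> real \<Rightarrow> ratfun \<Rightarrow> ratfun" where
  "gYfun Fbi dl gm x = rconst gm * rconst Fbi * x / (1 + rconst dl * x)"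

text \<open>fpair ... k = (f_{n-k}, f_{n-k+1}^Y), computed by the backward recursion
  f_n = s, f_{n+1}^Y = 0, f_i^Y = g_i^Y(f_i), f_{i-1} = lambda_i Fb_i f_i / d_i(f_i, f_{i+1}^Y).\<close>
fun fpair :: "nat \<Rightarrow> (nat \<Rightarrow> real) \<Rightarrow> (nat \<Rightarrow> real) \<Rightarrow> (nat \<Rightarrow> real) \<Rightarrow> (nat \<Rightarrow> real) \<Rightarrow> (nat \<Rightarrow> real)
     \<Rightarrow> (nat \<Rightarrow> real) \<Rightarrow> (nat \<Rightarrow> real) \<Rightarrow> (nat \<Rightarrow> real) \<Rightarrow> nat \<Rightarrow> ratfun \<times> ratfun" where
  "fpair n a0 b0 c0 a1 b1 c1 Fb Sb 0 = (rvar, 0)"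
| "fpair n a0 b0 c0 a1 b1 c1 Fb Sb (Suc k) =
     (let i = n - k; (x, yY) = fpair n a0 b0 c0 a1 b1 c1 Fb Sb k;
          dl = delta a1 b1 c1 i; gm = gamma c0 a1 b1 c1 i; lm = lambda a0 b0 c0 a1 b1 c1 i
      in (rconst lm * rconst (Fb i) * x / dfun (Sb i) (Fb i) dl gm x yY,
          gYfun (Fb i) dl gm x))"

definition f0 :: "nat \<Rightarrow> (nat \<Rightarrow> real) \<Rightarrow> (nat \<Rightarrow> real) \<Rightarrow> (nat \<Rightarrow> real) \<Rightarrow> (nat \<Rightarrow> real) \<Rightarrow> (nat \<Rightarrow> real)
     \<Rightarrow> (nat \<Rightarrow> real) \<Rightarrow> (nat \<Rightarrow> real) \<Rightarrow> (nat \<Rightarrow> real) \<Rightarrow> ratfun" where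
  "f0 n a0 b0 c0 a1 b1 c1 Fb Sb = fst (fpair n a0 b0 c0 a1 b1 c1 Fb Sb n)"

definition rfun :: "nat \<Rightarrow> (nat \<Rightarrow> real) \<Rightarrow> (nat \<Rightarrow> real) \<Rightarrow> (nat \<Rightarrow> real) \<Rightarrow> (nat \<Rightarrow> real) \<Rightarrow> (nat \<Rightarrow> real)
     \<Rightarrow> (nat \<Rightarrow> real) \<Rightarrow> (nat \<Rightarrow> real) \<Rightarrow> (nat \<Rightarrow> real) \<Rightarrow> ratfun" where
  "rfun n a0 b0 c0 a1 b1 c1 Fb Sb =
     fst (fpair n a0 b0 c0 a1 b1 c1 Fb Sb n) + snd (fpair n a0 b0 c0 a1 b1 c1 Fb Sb n)"

definition rnum :: "ratfun \<Rightarrow> real poly" where "rnum q = fst (quot_of_fract q)"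
definition rden :: "ratfun \<Rightarrow> real poly" where "rden q = snd (quot_of_fract q)"
definition reval :: "ratfun \<Rightarrow> real \<Rightarrow> real" where
  "reval q s = poly (rnum q) s / poly (rden q) s"

definition smallest_pos_zero :: "real poly \<Rightarrow> real \<Rightarrow> bool" where
  "smallest_pos_zero p \<sigma> \<longleftrightarrow> \<sigma> > 0 \<and> poly p \<sigma> = 0 \<and> (\<forall>t. 0 < t \<and> t < \<sigma> \<longrightarrow> poly p t \<noteq> 0)"

text \<open>Steady state / BMSS. Concentrations: S0 i = S_i^0, S1 i = S_i^1 (with S1 0 = E = S_0^1),
  F i = F_i, Y0 i = Y_i^0, Y1 i = Y_i^1 for i = 1..n; Y_{n+1}^0 := 0.\<close>
definition steady_state :: "nat \<Rightarrow> (nat \<Rightarrow> real) \<Rightarrow> (nat \<Rightarrow> real) \<Rightarrow> (nat \<Rightarrow> real) \<Rightarrow> (nat \<Rightarrow> real) \<Rightarrow> (nat \<Rightarrow> real)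
     \<Rightarrow> (nat \<Rightarrow> real) \<Rightarrow> (nat \<Rightarrow> real) \<Rightarrow> (nat \<Rightarrow> real) \<Rightarrow> real
     \<Rightarrow> (nat \<Rightarrow> real) \<Rightarrow> (nat \<Rightarrow> real) \<Rightarrow> (nat \<Rightarrow> real) \<Rightarrow> (nat \<Rightarrow> real) \<Rightarrow> (nat \<Rightarrow> real) \<Rightarrow> bool" where
  "steady_state n a0 b0 c0 a1 b1 c1 Fb Sb Eb S0 S1 F Y0 Y1 \<longleftrightarrow>
     (\<forall>i\<in>{1..n}.
        Y0 i = gamma c0 a1 b1 c1 i * F i * S1 i \<and>
        Y1 i = delta a1 b1 c1 i * F i * S1 i \<and>
        lambda a0 b0 c0 a1 b1 c1 i * F i * S1 i = S0 i * S1 (i - 1) \<and>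
        Fb i = F i + Y1 i \<and>
        Sb i = S0 i + S1 i + Y0 i + Y1 i + (if i < n then Y0 (Suc i) else 0)) \<and>
     Eb = S1 0 + Y0 1"

definition BMSS :: "nat \<Rightarrow> (nat \<Rightarrow> real) \<Rightarrow> (nat \<Rightarrow> real) \<Rightarrow> (nat \<Rightarrow> real) \<Rightarrow> (nat \<Rightarrow> real) \<Rightarrow> (nat \<Rightarrow> real)
     \<Rightarrow> (nat \<Rightarrow> real) \<Rightarrow> (nat \<Rightarrow> real) \<Rightarrow> (nat \<Rightarrow> real) \<Rightarrow> real
     \<Rightarrow> (nat \<Rightarrow> real) \<Rightarrow> (nat \<Rightarrow> real) \<Rightarrow> (nat \<Rightarrow> real) \<Rightarrow> (nat \<Rightarrow> real) \<Rightarrow> (nat \<Rightarrow> real) \<Rightarrow> bool" where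
  "BMSS n a0 b0 c0 a1 b1 c1 Fb Sb Eb S0 S1 F Y0 Y1 \<longleftrightarrow>
     steady_state n a0 b0 c0 a1 b1 c1 Fb Sb Eb S0 S1 F Y0 Y1 \<and>
     Eb > 0 \<and> (\<forall>i\<in>{1..n}. Fb i > 0 \<and> Sb i > 0) \<and>
     S1 0 \<ge> 0 \<and>
     (\<forall>i\<in>{1..n}. S0 i \<ge> 0 \<and> S1 i \<ge> 0 \<and> F i \<ge> 0 \<and> Y0 i \<ge> 0 \<and> Y1 i \<ge> 0)"

end

theory Submission
  imports Defs
begin


definition good :: "ratfun \<Rightarrow> real \<Rightarrow> bool" where
  "good q t \<longleftrightarrow> poly (rden q) t \<noteq> 0"

lemma rep_Fract:
  assumes "b \<noteq> 0" "poly b t \<noteq> 0"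
  shows "good (Fract a b) t \<and> reval (Fract a b) t = poly a t / poly b t"
proof -
  obtain p q where pq: "quot_of_fract (Fract a b) = (p, q)" by (cases "quot_of_fract (Fract a b)")
  have q0: "q \<noteq> 0" using snd_quot_of_fract_nonzero[of "Fract a b"] pq by simp
  have "Fract p q = Fract a b" using Fract_quot_of_fract[of "Fract a b"] pq by simp
  hence e: "p * b = a * q" using eq_fract(1)[OF q0 assms(1)] by simp
  have cop: "coprime p q" using coprime_quot_of_fract[of "Fract a b"] pq by simp
  have "q dvd p * b" using e by simp
  hence "q dvd b" using cop by (simp add: coprime_dvd_mult_right_iff coprime_commute)
  then obtain c where "b = q * c" by (auto elim: dvdE)
  hence qt: "poly q t \<noteq> 0" using assms(2) by auto
  have "poly p t * poly b t = poly a t * poly q t" using arg_cong[OF e, of "\<lambda>r. poly r t"] by simp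
  hence "poly p t / poly q t = poly a t / poly b t" using qt assms(2) by (simp add: field_simps)
  thus ?thesis using qt pq by (simp add: good_def reval_def rden_def rnum_def)
qed

lemma rep_self: "rden q \<noteq> 0 \<and> q = Fract (rnum q) (rden q)"
  by (simp add: rden_def rnum_def)

lemma good_add: assumes "good x t" "good y t"
  shows "good (x + y) t \<and> reval (x + y) t = reval x t + reval y t"
proof -
  have D0: "rden x * rden y \<noteq> 0" using rep_self[of x] rep_self[of y]  by auto
  have Dt: "poly (rden x * rden y) t \<noteq> 0" using assms by (auto simp: good_def reval_def)
  have e: "x + y = Fract (rnum x * rden y + rnum y * rden x) (rden x * rden y)"
    by (metis add_fract rep_self)
  have "reval x t + reval y t = poly (rnum x * rden y + rnum y * rden x) t / poly (rden x * rden y) t"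
    using assms unfolding reval_def poly_mult poly_add poly_diff good_def by (rule add_frac_eq)
  thus ?thesis using rep_Fract[OF D0 Dt, of "rnum x * rden y + rnum y * rden x"] e by simp
qed

lemma good_diff: assumes "good x t" "good y t"
  shows "good (x - y) t \<and> reval (x - y) t = reval x t - reval y t"
proof -
  have D0: "rden x * rden y \<noteq> 0" using rep_self[of x] rep_self[of y]  by auto
  have Dt: "poly (rden x * rden y) t \<noteq> 0" using assms by (auto simp: good_def reval_def)
  have e: "x - y = Fract (rnum x * rden y - rnum y * rden x) (rden x * rden y)"
    by (metis diff_fract rep_self)
  have "reval x t - reval y t = poly (rnum x * rden y - rnum y * rden x) t / poly (rden x * rden y) t"
    using assms unfolding reval_def poly_mult poly_add poly_diff good_def by (rule diff_frac_eq)
  thus ?thesis using rep_Fract[OF D0 Dt, of "rnum x * rden y - rnum y * rden x"] e by simp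
qed

lemma good_mult: assumes "good x t" "good y t"
  shows "good (x * y) t \<and> reval (x * y) t = reval x t * reval y t"
proof -
  have D0: "rden x * rden y \<noteq> 0" using rep_self[of x] rep_self[of y]  by auto
  have Dt: "poly (rden x * rden y) t \<noteq> 0" using assms by (auto simp: good_def reval_def)
  have e: "x * y = Fract (rnum x * rnum y) (rden x * rden y)"
    by (metis mult_fract rep_self)
  have "reval x t * reval y t = poly (rnum x * rnum y) t / poly (rden x * rden y) t"
    unfolding reval_def poly_mult by (rule times_divide_times_eq)
  thus ?thesis using rep_Fract[OF D0 Dt, of "rnum x * rnum y"] e by simp
qed

lemma good_div: assumes "good x t" "good y t" "reval y t \<noteq> 0"
  shows "good (x / y) t \<and> reval (x / y) t = reval x t / reval y t"
proof -
  have ny: "poly (rnum y) t \<noteq> 0" using assms(3) by (simp add: reval_def)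
  have D0: "rden x * rnum y \<noteq> 0" using rep_self[of x] ny by auto
  have Dt: "poly (rden x * rnum y) t \<noteq> 0" using assms ny by (auto simp: good_def reval_def)
  have e: "x / y = Fract (rnum x * rden y) (rden x * rnum y)"
    by (metis divide_fract rep_self)
  have "reval x t / reval y t = poly (rnum x * rden y) t / poly (rden x * rnum y) t"
    using assms ny unfolding reval_def poly_mult good_def by (simp add: divide_divide_times_eq)
  thus ?thesis using rep_Fract[OF D0 Dt, of "rnum x * rden y"] e by simp
qed

lemma good_const: "good (rconst c) t \<and> reval (rconst c) t = c"
  using rep_Fract[of 1 t "[:c:]"] by (simp add: rconst_def)

lemma good_var: "good rvar t \<and> reval rvar t = t"
  using rep_Fract[of 1 t "[:0,1:]"] by (simp add: rvar_def)

lemma good_one: "good 1 t \<and> reval 1 t = 1"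
  using good_const[of 1 t] by (simp add: rconst_def One_fract_def one_pCons)
lemma good_zero: "good 0 t \<and> reval 0 t = 0"
  using good_const[of 0 t] by (simp add: rconst_def Zero_fract_def)

lemma good_pow2: assumes "good x t" shows "good (x^2) t \<and> reval (x^2) t = (reval x t)^2"
  using good_mult[OF assms assms] by (simp add: power2_eq_square)

lemma good_cont: assumes "\<And>t. t \<in> S \<Longrightarrow> good q t" shows "continuous_on S (reval q)"
  unfolding reval_def using assms by (auto simp: good_def intro!: continuous_intros)

lemma good_isCont: assumes "good q t" shows "isCont (reval q) t"
  unfolding reval_def using assms by (auto simp: good_def intro!: continuous_intros)



lemma reval_add: "good x t \<Longrightarrow> good y t \<Longrightarrow> reval (x + y) t = reval x t + reval y t" using good_add by blast
lemma good_addI[simp]: "good x t \<Longrightarrow> good y t \<Longrightarrow> good (x + y) t" using good_add by blast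
lemma reval_diff: "good x t \<Longrightarrow> good y t \<Longrightarrow> reval (x - y) t = reval x t - reval y t" using good_diff by blast
lemma good_diffI[simp]: "good x t \<Longrightarrow> good y t \<Longrightarrow> good (x - y) t" using good_diff by blast
lemma reval_mult: "good x t \<Longrightarrow> good y t \<Longrightarrow> reval (x * y) t = reval x t * reval y t" using good_mult by blast
lemma good_multI[simp]: "good x t \<Longrightarrow> good y t \<Longrightarrow> good (x * y) t" using good_mult by blast
lemma reval_div: "good x t \<Longrightarrow> good y t \<Longrightarrow> reval y t \<noteq> 0 \<Longrightarrow> reval (x / y) t = reval x t / reval y t" using good_div by blast
lemma good_divI: "good x t \<Longrightarrow> good y t \<Longrightarrow> reval y t \<noteq> 0 \<Longrightarrow> good (x / y) t" using good_div by blast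
lemma reval_pow2: "good x t \<Longrightarrow> reval (x^2) t = (reval x t)^2" using good_pow2 by blast
lemma good_pow2I[simp]: "good x t \<Longrightarrow> good (x^2) t" using good_pow2 by blast
lemma good_constI[simp]: "good (rconst c) t" and reval_const[simp]: "reval (rconst c) t = c" using good_const by blast+
lemma good_oneI[simp]: "good 1 t" and reval_one[simp]: "reval 1 t = 1" using good_one by blast+
lemma good_zeroI[simp]: "good 0 t" and reval_zero[simp]: "reval 0 t = 0" using good_zero by blast+
lemma good_varI[simp]: "good rvar t" and reval_var[simp]: "reval rvar t = t" using good_var by blast+

lemmas reval_simps = reval_add reval_diff reval_mult reval_pow2

locale cascade =
  fixes n :: nat and a0 b0 c0 a1 b1 c1 Fb Sb :: "nat \<Rightarrow> real"
  assumes n1: "n \<ge> 1"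
    and rates: "\<forall>i\<in>{1..n}. a0 i > 0 \<and> b0 i > 0 \<and> c0 i > 0 \<and> a1 i > 0 \<and> b1 i > 0 \<and> c1 i > 0"
    and tots: "\<forall>i\<in>{1..n}. Fb i > 0 \<and> Sb i > 0"
begin

abbreviation "dl i \<equiv> delta a1 b1 c1 i"
abbreviation "gm i \<equiv> gamma c0 a1 b1 c1 i"
abbreviation "lm i \<equiv> lambda a0 b0 c0 a1 b1 c1 i"
abbreviation "FP k \<equiv> fpair n a0 b0 c0 a1 b1 c1 Fb Sb k"

lemma posi: assumes "1 \<le> i" "i \<le> n"
  shows "dl i > 0" "gm i > 0" "lm i > 0" "Fb i > 0" "Sb i > 0"
proof -
  have "i \<in> {1..n}" using assms by auto
  hence h: "a0 i > 0" "b0 i > 0" "c0 i > 0" "a1 i > 0" "b1 i > 0" "c1 i > 0" "Fb i > 0" "Sb i > 0"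
    using rates tots by auto
  have d: "dl i > 0" using h by (simp add: delta_def)
  have g: "gm i > 0" using h d unfolding gamma_def by simp
  show "dl i > 0" "gm i > 0" "Fb i > 0" "Sb i > 0" using d g h by auto
  show "lm i > 0" using h g unfolding lambda_def by (simp add: add_pos_pos)
qed

definition dr :: "nat \<Rightarrow> real \<Rightarrow> real \<Rightarrow> real" where
  "dr i x y = (Sb i - y) - x - Fb i * (dl i + gm i) * x + dl i * (Sb i - y) * x - dl i * x^2"
definition S0r :: "nat \<Rightarrow> real \<Rightarrow> real \<Rightarrow> real" where
  "S0r i x y = Sb i - y - x - Fb i * (dl i + gm i) * (x / (1 + dl i * x))"
definition gYr :: "nat \<Rightarrow> real \<Rightarrow> real" where
  "gYr i x = gm i * Fb i * x / (1 + dl i * x)"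

lemma dr_eq: assumes "1 + dl i * x \<noteq> 0" shows "dr i x y = (1 + dl i * x) * S0r i x y"
  using assms unfolding dr_def S0r_def by (simp add: field_simps power2_eq_square)

primrec XY :: "nat \<Rightarrow> real \<Rightarrow> real \<times> real" where
  "XY 0 s = (s, 0)"
| "XY (Suc k) s = (lm (n-k) * Fb (n-k) * fst (XY k s) / dr (n-k) (fst (XY k s)) (snd (XY k s)),
                   gYr (n-k) (fst (XY k s)))"

definition "X k s = fst (XY k s)"
definition "Y k s = snd (XY k s)"

lemma X0[simp]: "X 0 s = s" and Y0[simp]: "Y 0 s = 0" by (simp_all add: X_def Y_def)
lemma XS: "X (Suc k) s = lm (n-k) * Fb (n-k) * X k s / dr (n-k) (X k s) (Y k s)"
  and YS: "Y (Suc k) s = gYr (n-k) (X k s)" by (simp_all add: X_def Y_def)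

definition ok :: "nat \<Rightarrow> real \<Rightarrow> bool" where
  "ok k s \<longleftrightarrow> 0 \<le> s \<and> (\<forall>j<k. dr (n-j) (X j s) (Y j s) > 0)"

lemma ok_Suc: "ok (Suc k) s \<longleftrightarrow> ok k s \<and> dr (n-k) (X k s) (Y k s) > 0"
  unfolding ok_def by (auto simp: less_Suc_eq)

lemma ok_mono: "ok k s \<Longrightarrow> j \<le> k \<Longrightarrow> ok j s"
  unfolding ok_def by auto

lemma nonneg: "k \<le> n \<Longrightarrow> ok k s \<Longrightarrow> X k s \<ge> 0 \<and> Y k s \<ge> 0"
proof (induction k)
  case 0 thus ?case by (simp add: ok_def)
next
  case (Suc k)
  have i: "1 \<le> n - k" "n - k \<le> n" using Suc.prems by auto
  have ih: "X k s \<ge> 0" "Y k s \<ge> 0" using Suc by (auto simp: ok_Suc)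
  have d: "dr (n-k) (X k s) (Y k s) > 0" using Suc.prems by (simp add: ok_Suc)
  have "X (Suc k) s \<ge> 0" unfolding XS using posi[OF i] ih d by simp
  moreover have "Y (Suc k) s \<ge> 0" unfolding YS gYr_def using posi[OF i] ih by simp
  ultimately show ?case by simp
qed

lemma FP_fst: "fst (FP (Suc k)) = rconst (lm (n-k)) * rconst (Fb (n-k)) * fst (FP k) /
     dfun (Sb (n-k)) (Fb (n-k)) (dl (n-k)) (gm (n-k)) (fst (FP k)) (snd (FP k))"
  and FP_snd: "snd (FP (Suc k)) = gYfun (Fb (n-k)) (dl (n-k)) (gm (n-k)) (fst (FP k))"
  by (simp_all add: Let_def split_beta)

lemma link: "k \<le> n \<Longrightarrow> ok k s \<Longrightarrow> good (fst (FP k)) s \<and> good (snd (FP k)) s \<and>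
   reval (fst (FP k)) s = X k s \<and> reval (snd (FP k)) s = Y k s"
proof (induction k)
  case 0 thus ?case by simp
next
  case (Suc k)
  have i: "1 \<le> n - k" "n - k \<le> n" using Suc.prems by auto
  have okk: "ok k s" using Suc.prems by (simp add: ok_Suc)
  have ih: "good (fst (FP k)) s" "good (snd (FP k)) s" "reval (fst (FP k)) s = X k s" "reval (snd (FP k)) s = Y k s"
    using Suc okk by auto
  have nn: "X k s \<ge> 0" using nonneg[OF _ okk] Suc.prems by auto
  have d: "dr (n-k) (X k s) (Y k s) > 0" using Suc.prems by (simp add: ok_Suc)
  let ?D = "dfun (Sb (n-k)) (Fb (n-k)) (dl (n-k)) (gm (n-k)) (fst (FP k)) (snd (FP k))"
  have gD: "good ?D s" using ih unfolding dfun_def by simp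
  have rD: "reval ?D s = dr (n-k) (X k s) (Y k s)" using ih unfolding dfun_def dr_def
    by (simp add: reval_simps)
  let ?N = "rconst (lm (n-k)) * rconst (Fb (n-k)) * fst (FP k)"
  have gN: "good ?N s" "reval ?N s = lm (n-k) * Fb (n-k) * X k s" using ih by (simp_all add: reval_simps)
  let ?E = "1 + rconst (dl (n - k)) * fst (FP k)"
  have gE: "good ?E s" "reval ?E s = 1 + dl (n-k) * X k s" using ih by (simp_all add: reval_simps)
  have Epos: "1 + dl (n-k) * X k s > 0" using posi[OF i] nn by (simp add: add_pos_nonneg)
  let ?M = "rconst (gm (n-k)) * rconst (Fb (n-k)) * fst (FP k)"
  have gM: "good ?M s" "reval ?M s = gm (n-k) * Fb (n-k) * X k s" using ih by (simp_all add: reval_simps)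
  show ?case unfolding FP_fst FP_snd XS YS gYfun_def
    using good_div[OF gN(1) gD] good_div[OF gM(1) gE(1)] gN(2) gM(2) gE(2) rD d Epos
    by (simp add: gYr_def)
qed

end


lemma frac_strict: fixes x y d :: real assumes "0 \<le> x" "x < y" "d > 0"
  shows "x / (1 + d * x) < y / (1 + d * y)"
proof -
  have p: "1 + d * x > 0" "1 + d * y > 0" using assms by (auto intro: add_pos_nonneg)
  have "x * (1 + d * y) < y * (1 + d * x)" using assms by (simp add: algebra_simps)
  thus ?thesis using p by (simp add: divide_simps)
qed

lemma frac_mono: fixes x y d :: real assumes "0 \<le> x" "x \<le> y" "d > 0"
  shows "x / (1 + d * x) \<le> y / (1 + d * y)"
  using frac_strict[OF assms(1) _ assms(3), of y] assms(2) by (cases "x = y") auto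

context cascade begin

definition "I k = {s. ok k s}"

definition P :: "nat \<Rightarrow> bool" where
  "P k \<longleftrightarrow> (\<forall>s t. ok k t \<longrightarrow> 0 \<le> s \<longrightarrow> s \<le> t \<longrightarrow> ok k s) \<and> ok k 0 \<and>
     continuous_on (I k) (X k) \<and> continuous_on (I k) (Y k) \<and>
     strict_mono_on (I k) (X k) \<and> mono_on (I k) (Y k) \<and> X k 0 = 0 \<and> Y k 0 = 0 \<and>
     (\<forall>M. \<exists>s\<in>I k. X k s > M)"

lemma P0: "P 0"
proof -
  have "\<exists>s\<in>I 0. X 0 s > M" for M
    by (rule bexI[of _ "max M 0 + 1"]) (auto simp: I_def ok_def)
  thus ?thesis unfolding P_def by (auto simp: ok_def I_def intro!: continuous_intros strict_mono_onI mono_onI)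
qed

lemma step:
  assumes k: "k < n" and Pk: "P k"
  shows "P (Suc k) \<and> (\<exists>b>0. I (Suc k) = {0..<b})"
proof -
  define i where "i = n - k"
  have i: "1 \<le> i" "i \<le> n" using k by (auto simp: i_def)
  note ps = posi[OF i]
  from Pk have down: "\<And>s t. ok k t \<Longrightarrow> 0 \<le> s \<Longrightarrow> s \<le> t \<Longrightarrow> ok k s" and ok0: "ok k 0"
    and cX: "continuous_on (I k) (X k)" and cY: "continuous_on (I k) (Y k)"
    and mX: "strict_mono_on (I k) (X k)" and mY: "mono_on (I k) (Y k)"
    and X00: "X k 0 = 0" and Y00: "Y k 0 = 0" and unb: "\<And>M. \<exists>s\<in>I k. X k s > M"
    unfolding P_def by blast+
  have nn: "\<And>s. s \<in> I k \<Longrightarrow> X k s \<ge> 0 \<and> Y k s \<ge> 0" using nonneg k by (auto simp: I_def)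
  define E where "E s = 1 + dl i * X k s" for s
  have Epos: "\<And>s. s \<in> I k \<Longrightarrow> E s > 0" unfolding E_def using nn ps by (auto intro: add_pos_nonneg)
  define h where "h s = X k s / E s" for s
  define Sf where "Sf s = S0r i (X k s) (Y k s)" for s
  have Sf_eq: "Sf s = Sb i - Y k s - X k s - Fb i * (dl i + gm i) * h s" for s
    unfolding Sf_def S0r_def h_def E_def by simp
  have okS: "ok (Suc k) s \<longleftrightarrow> s \<in> I k \<and> Sf s > 0" for s
  proof -
    have "s \<in> I k \<Longrightarrow> dr i (X k s) (Y k s) = E s * Sf s"
      using dr_eq[of i "X k s"] Epos unfolding E_def Sf_def by force
    moreover have "s \<in> I k \<Longrightarrow> E s > 0" using Epos by blast
    ultimately show ?thesis using ok_Suc[of k s] unfolding i_def[symmetric] I_def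
      by (auto simp: zero_less_mult_iff)
  qed
  have IS: "I (Suc k) = {s \<in> I k. Sf s > 0}" unfolding I_def using okS by (auto simp: I_def)
  have XSf: "X (Suc k) s = lm i * Fb i * h s / Sf s" if "s \<in> I k" for s
  proof -
    have "dr i (X k s) (Y k s) = E s * Sf s"
      using dr_eq[of i "X k s"] Epos that unfolding E_def Sf_def by force
    thus ?thesis unfolding XS h_def i_def[symmetric] using Epos[OF that] by (simp add: field_simps)
  qed
  have YSf: "Y (Suc k) s = gm i * Fb i * h s" for s
    unfolding YS h_def E_def gYr_def i_def by simp
  have hstrict: "h s < h t" if "s \<in> I k" "t \<in> I k" "s < t" for s t
    unfolding h_def E_def using frac_strict[of "X k s" "X k t" "dl i"] nn[OF that(1)] strict_mono_onD[OF mX that] ps by simp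
  have hmono: "h s \<le> h t" if "s \<in> I k" "t \<in> I k" "s \<le> t" for s t
    using hstrict[OF that(1,2)] that by (cases "s = t") auto
  have hnn: "h s \<ge> 0" if "s \<in> I k" for s
    unfolding h_def using nn[OF that] Epos[OF that] by simp
  have Sdec: "Sf t < Sf s" if "s \<in> I k" "t \<in> I k" "s < t" for s t
  proof -
    have "Y k s \<le> Y k t" using mono_onD[OF mY that(1,2)] that(3) by simp
    moreover have "X k s < X k t" using strict_mono_onD[OF mX that] .
    moreover have "Fb i * (dl i + gm i) * h s \<le> Fb i * (dl i + gm i) * h t"
      using hmono[OF that(1,2)] that(3) ps by (intro mult_left_mono) auto
    ultimately show ?thesis unfolding Sf_eq by linarith
  qed
  have cE: "continuous_on (I k) E" unfolding E_def by (intro continuous_intros cX)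
  have Ene: "\<forall>s\<in>I k. E s \<noteq> 0" using Epos by (metis less_irrefl)
  have ch: "continuous_on (I k) h" unfolding h_def using Ene by (intro continuous_intros cX cE)
  have cS: "continuous_on (I k) Sf" unfolding Sf_eq[abs_def] by (intro continuous_intros cX cY ch)
  have I0: "0 \<in> I k" using ok0 by (simp add: I_def)
  have S00: "Sf 0 = Sb i" unfolding Sf_eq h_def X00 Y00 by simp
  have Sle: "Sf s \<le> Sb i - X k s" if "s \<in> I k" for s
    unfolding Sf_eq using nn[OF that] hnn[OF that] ps
    by (simp add: algebra_simps)
  obtain s1 where s1: "s1 \<in> I k" "X k s1 > Sb i" using unb by blast
  have Ss1: "Sf s1 < 0" using Sle[OF s1(1)] s1(2) by simp
  have s1nn: "0 \<le> s1" using s1(1) by (simp add: I_def ok_def)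
  have sub: "{0..s1} \<subseteq> I k" using down s1(1) by (auto simp: I_def)
  obtain b where b: "0 \<le> b" "b \<le> s1" "Sf b = 0"
    using IVT2'[of Sf s1 0 0, OF _ _ s1nn continuous_on_subset[OF cS sub]] Ss1 S00 ps by auto
  have bI: "b \<in> I k" using sub b by auto
  have bpos: "b > 0" using b S00 ps by (cases "b = 0") auto
  have Ieq: "I (Suc k) = {0..<b}"
  proof
    show "I (Suc k) \<subseteq> {0..<b}"
    proof
      fix s assume s: "s \<in> I (Suc k)"
      hence sI: "s \<in> I k" "Sf s > 0" using IS by auto
      have "0 \<le> s" using sI by (simp add: I_def ok_def)
      moreover have "s < b"
      proof (rule ccontr)
        assume "\<not> s < b"
        hence "b < s \<or> b = s" by auto
        thus False using Sdec[OF bI sI(1)] sI(2) b(3) by auto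
      qed
      ultimately show "s \<in> {0..<b}" by simp
    qed
  next
    show "{0..<b} \<subseteq> I (Suc k)"
    proof
      fix s assume s: "s \<in> {0..<b}"
      have sI: "s \<in> I k" using down[of b s] bI s by (auto simp: I_def)
      have "Sf s > 0" using Sdec[OF sI bI] s b(3) by auto
      thus "s \<in> I (Suc k)" using IS sI by auto
    qed
  qed
  have sub2: "I (Suc k) \<subseteq> I k" using IS by auto
  have Spos: "\<And>s. s \<in> I (Suc k) \<Longrightarrow> Sf s > 0" using IS by auto
  have P1: "\<forall>s t. ok (Suc k) t \<longrightarrow> 0 \<le> s \<longrightarrow> s \<le> t \<longrightarrow> ok (Suc k) s"
    using Ieq by (auto simp: I_def set_eq_iff)
  have P2: "ok (Suc k) 0" using Ieq bpos by (auto simp: I_def set_eq_iff)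
  have P3: "continuous_on (I (Suc k)) (X (Suc k))"
  proof -
    have "continuous_on (I (Suc k)) (\<lambda>s. lm i * Fb i * h s / Sf s)"
      using Spos by (intro continuous_intros continuous_on_subset[OF ch sub2] continuous_on_subset[OF cS sub2]) (metis less_irrefl)
    thus ?thesis by (rule continuous_on_cong[THEN iffD1, rotated 2]) (use XSf sub2 in auto)
  qed
  have P4: "continuous_on (I (Suc k)) (Y (Suc k))"
    unfolding YSf by (intro continuous_intros continuous_on_subset[OF ch sub2])
  have P5: "strict_mono_on (I (Suc k)) (X (Suc k))"
  proof (rule strict_mono_onI)
    fix r s assume rs: "r \<in> I (Suc k)" "s \<in> I (Suc k)" "r < s"
    have rI: "r \<in> I k" and sI: "s \<in> I k" using rs sub2 by auto
    have c: "lm i * Fb i > 0" using ps by simp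
    have "h r / Sf r \<le> h r / Sf s"
      using Sdec[OF rI sI rs(3)] Spos[OF rs(2)] hnn[OF rI] by (intro divide_left_mono) auto
    also have "\<dots> < h s / Sf s" using hstrict[OF rI sI rs(3)] Spos[OF rs(2)] by (simp add: divide_strict_right_mono)
    finally have "h r / Sf r < h s / Sf s" .
    hence "lm i * Fb i * (h r / Sf r) < lm i * Fb i * (h s / Sf s)" using c by (rule mult_strict_left_mono)
    thus "X (Suc k) r < X (Suc k) s" unfolding XSf[OF rI] XSf[OF sI] by (simp only: times_divide_eq_right)
  qed
  have P6: "mono_on (I (Suc k)) (Y (Suc k))"
  proof (rule mono_onI)
    fix r s assume rs: "r \<in> I (Suc k)" "s \<in> I (Suc k)" "r \<le> s"
    thus "Y (Suc k) r \<le> Y (Suc k) s" unfolding YSf using hmono[of r s] sub2 ps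
      by (intro mult_left_mono) auto
  qed
  have P7: "X (Suc k) 0 = 0" using XSf[OF I0] unfolding h_def X00 by simp
  have P8: "Y (Suc k) 0 = 0" unfolding YSf h_def X00 by simp
  have P9: "\<exists>s\<in>I (Suc k). X (Suc k) s > M" for M
  proof -
    define M' where "M' = max M 1"
    have M'pos: "M' > 0" by (simp add: M'_def)
    have b2: "b/2 \<in> I k" using down[of b "b/2"] bI bpos by (auto simp: I_def)
    define c where "c = h (b/2)"
    have cpos: "c > 0"
    proof -
      have "h 0 < h (b/2)" using hstrict[OF I0 b2] bpos by simp
      thus ?thesis unfolding c_def h_def X00 by simp
    qed
    define K where "K = lm i * Fb i * c"
    have Kpos: "K > 0" unfolding K_def using cpos ps by simp
    obtain d where d: "d > 0" "\<And>s. s \<in> I k \<Longrightarrow> dist s b < d \<Longrightarrow> dist (Sf s) (Sf b) < K / M'"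
      using cS bI Kpos M'pos unfolding continuous_on_iff by (metis divide_pos_pos)
    define s where "s = max (b/2) (b - d/2)"
    have s: "0 \<le> s" "s < b" "b/2 \<le> s" "dist s b < d" using bpos d(1) by (auto simp: s_def dist_real_def)
    have sIS: "s \<in> I (Suc k)" using Ieq s by auto
    have sI: "s \<in> I k" using sIS sub2 by auto
    have Ss: "Sf s < K / M'" "Sf s > 0" using d(2)[OF sI s(4)] b(3) Spos[OF sIS] by (auto simp: dist_real_def)
    have hs: "h s \<ge> c" unfolding c_def using hmono[OF b2 sI s(3)] .
    have "M' < K / Sf s" using Ss M'pos Kpos by (simp add: field_simps)
    also have "K / Sf s \<le> lm i * Fb i * h s / Sf s" unfolding K_def
      using hs ps Ss(2) by (intro divide_right_mono mult_left_mono) auto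
    finally have "M' < X (Suc k) s" using XSf[OF sI] by simp
    thus ?thesis using sIS M'_def by (intro bexI[of _ s]) auto
  qed
  show ?thesis unfolding P_def using P1 P2 P3 P4 P5 P6 P7 P8 P9 Ieq bpos by blast
qed

end


context cascade begin

lemma Pall: "k \<le> n \<Longrightarrow> P k"
proof (induction k)
  case 0 show ?case by (rule P0)
next
  case (Suc k) thus ?case using step[of k] by auto
qed

lemma sigma_ex: "\<exists>\<sigma>>0. I n = {0..<\<sigma>}"
  using step[of "n - 1"] Pall[of "n - 1"] n1 by auto

lemma S0alg:
  assumes "1 \<le> i" "i \<le> n" "x \<ge> 0" "F = Fb i / (1 + dl i * x)"
  shows "Sb i - x - gm i * F * x - dl i * F * x - y = S0r i x y"
proof -
  have E: "1 + dl i * x > 0" using posi[OF assms(1,2)] assms(3) by (simp add: add_pos_nonneg)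
  have a: "gm i * F * x + dl i * F * x = (dl i + gm i) * (F * x)" by (simp add: algebra_simps)
  have b: "F * x = Fb i * (x / (1 + dl i * x))" unfolding assms(4) by simp
  have "gm i * F * x + dl i * F * x = Fb i * (dl i + gm i) * (x / (1 + dl i * x))"
    unfolding a b by simp
  thus ?thesis unfolding S0r_def by linarith
qed

lemma construct:
  assumes okn: "ok n s" and Eb: "Eb = X n s + Y n s" "Eb > 0"
  shows "\<exists>S0 S1 F Y0 Y1. BMSS n a0 b0 c0 a1 b1 c1 Fb Sb Eb S0 S1 F Y0 Y1"
proof -
  define S1 where "S1 j = X (n - j) s" for j
  define F where "F j = Fb j / (1 + dl j * S1 j)" for j
  define Y0 where "Y0 j = gm j * F j * S1 j" for j
  define Y1 where "Y1 j = dl j * F j * S1 j" for j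
  define S0 where "S0 j = Sb j - S1 j - Y0 j - Y1 j - (if j < n then Y0 (Suc j) else 0)" for j
  have layer: "Y0 i = gm i * F i * S1 i \<and> Y1 i = dl i * F i * S1 i \<and>
      lm i * F i * S1 i = S0 i * S1 (i - 1) \<and> Fb i = F i + Y1 i \<and>
      Sb i = S0 i + S1 i + Y0 i + Y1 i + (if i < n then Y0 (Suc i) else 0) \<and>
      S0 i \<ge> 0 \<and> S1 i \<ge> 0 \<and> F i \<ge> 0 \<and> Y0 i \<ge> 0 \<and> Y1 i \<ge> 0" if iI: "i \<in> {1..n}" for i
  proof -
    have i: "1 \<le> i" "i \<le> n" using iI by auto
    note ps = posi[OF i]
    define k where "k = n - i"
    have k: "k < n" "n - k = i" "n - Suc k = i - 1" using i by (auto simp: k_def)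
    have okk: "ok k s" using ok_mono[OF okn] k by simp
    have x: "S1 i = X k s" unfolding S1_def k_def ..
    have xnn: "X k s \<ge> 0" "Y k s \<ge> 0" using nonneg[OF _ okk] k by auto
    define E where "E = 1 + dl i * X k s"
    have E: "E > 0" unfolding E_def using ps xnn by (simp add: add_pos_nonneg)
    have Fi: "F i = Fb i / E" unfolding F_def E_def x ..
    have dpos: "dr i (X k s) (Y k s) > 0" using okn k unfolding ok_def by auto
    have drE: "dr i (X k s) (Y k s) = E * S0r i (X k s) (Y k s)" using dr_eq[of i "X k s"] E unfolding E_def by simp
    have S0rpos: "S0r i (X k s) (Y k s) > 0" using dpos drE E by (simp add: zero_less_mult_iff)
    have yk: "Y k s = (if i < n then Y0 (Suc i) else 0)"
    proof (cases "i < n")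
      case True
      then obtain k' where k': "k = Suc k'" unfolding k_def by (cases "n - i") auto
      have "n - k' = Suc i" "n - Suc i = k'" using k' k_def i by auto
      hence "Y k s = gYr (Suc i) (S1 (Suc i))" unfolding k' YS S1_def by simp
      also have "\<dots> = Y0 (Suc i)" unfolding gYr_def Y0_def F_def by simp
      finally show ?thesis using True by simp
    next
      case False hence "k = 0" using i k_def by auto
      thus ?thesis using False by simp
    qed
    have S0i': "S0 i = Sb i - S1 i - Y0 i - Y1 i - Y k s" unfolding S0_def yk ..
    have S0i: "S0 i = S0r i (X k s) (Y k s)"
      unfolding S0i' unfolding Y0_def Y1_def x
      by (rule S0alg[OF i xnn(1)]) (simp add: F_def x)
    have nn1: "n - (i - 1) = Suc k" using i by (simp add: k_def)
    have S1m: "S1 (i - 1) = lm i * Fb i * X k s / dr i (X k s) (Y k s)"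
      unfolding S1_def nn1 XS k(2) ..
    have eq3: "lm i * F i * S1 i = S0 i * S1 (i - 1)"
      unfolding S1m S0i drE Fi x using S0rpos E by (simp add: field_simps)
    have e4a: "F i + Y1 i = F i * E" by (simp add: Y1_def x E_def algebra_simps)
    have eq4: "Fb i = F i + Y1 i" using e4a Fi E by simp
    have eq5: "Sb i = S0 i + S1 i + Y0 i + Y1 i + (if i < n then Y0 (Suc i) else 0)"
      unfolding S0_def by simp
    have nn: "S0 i \<ge> 0" "S1 i \<ge> 0" "F i \<ge> 0" "Y0 i \<ge> 0" "Y1 i \<ge> 0"
      using S0rpos S0i x xnn Fi E ps by (auto simp: Y0_def Y1_def)
    show ?thesis using eq3 eq4 eq5 nn by (simp add: Y0_def Y1_def)
  qed
  have S10: "S1 0 = X n s" unfolding S1_def by simp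
  have Y01: "Y0 1 = Y n s"
  proof -
    have "n = Suc (n - 1)" using n1 by simp
    hence "Y n s = gYr (n - (n - 1)) (X (n - 1) s)" by (metis YS)
    also have "\<dots> = Y0 1" using n1 unfolding gYr_def Y0_def F_def S1_def by simp
    finally show ?thesis by simp
  qed
  have A: "\<forall>i\<in>{1..n}. Y0 i = gm i * F i * S1 i \<and> Y1 i = dl i * F i * S1 i \<and>
      lm i * F i * S1 i = S0 i * S1 (i - 1) \<and> Fb i = F i + Y1 i \<and>
      Sb i = S0 i + S1 i + Y0 i + Y1 i + (if i < n then Y0 (Suc i) else 0)" using layer by blast
  have B: "\<forall>i\<in>{1..n}. S0 i \<ge> 0 \<and> S1 i \<ge> 0 \<and> F i \<ge> 0 \<and> Y0 i \<ge> 0 \<and> Y1 i \<ge> 0" using layer by blast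
  have D: "S1 0 \<ge> 0" using S10 nonneg[OF _ okn] by simp
  have E': "Eb = S1 0 + Y0 1" using Eb S10 Y01 by simp
  have "BMSS n a0 b0 c0 a1 b1 c1 Fb Sb Eb S0 S1 F Y0 Y1"
    unfolding BMSS_def steady_state_def using A B D E' tots Eb(2) by blast
  thus ?thesis by blast
qed

lemma S0pos:
  assumes B: "BMSS n a0 b0 c0 a1 b1 c1 Fb Sb Eb S0 S1 F Y0 Y1" and i: "1 \<le> i" "i \<le> n"
  shows "S0 i > 0"
proof (rule ccontr)
  assume "\<not> S0 i > 0"
  have L: "\<And>j. j \<in> {1..n} \<Longrightarrow> Y0 j = gm j * F j * S1 j \<and> Y1 j = dl j * F j * S1 j \<and>
        lm j * F j * S1 j = S0 j * S1 (j - 1) \<and> Fb j = F j + Y1 j \<and>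
        Sb j = S0 j + S1 j + Y0 j + Y1 j + (if j < n then Y0 (Suc j) else 0)"
    and N: "\<And>j. j \<in> {1..n} \<Longrightarrow> S0 j \<ge> 0 \<and> S1 j \<ge> 0 \<and> F j \<ge> 0 \<and> Y0 j \<ge> 0 \<and> Y1 j \<ge> 0"
    using B unfolding BMSS_def steady_state_def by blast+
  have Fpos: "F j > 0" if "j \<in> {1..n}" for j
  proof -
    have "Fb j = F j * (1 + dl j * S1 j)" using L[OF that] by (simp add: algebra_simps)
    moreover have "Fb j > 0" using tots that by auto
    moreover have "1 + dl j * S1 j > 0" using posi[of j] that N[OF that] by (simp add: add_pos_nonneg)
    ultimately show ?thesis using N[OF that] by (auto simp: zero_less_mult_iff)
  qed
  have zero1: "S1 j = 0" if "j \<in> {1..n}" "S0 j = 0" for j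
  proof -
    have "lm j * F j * S1 j = 0" using L[OF that(1)] that(2) by simp
    thus ?thesis using posi[of j] Fpos[OF that(1)] that(1) by auto
  qed
  have iI: "i \<in> {1..n}" using i by auto
  have S0i: "S0 i = 0" using N[OF iI] \<open>\<not> S0 i > 0\<close> by simp
  have S1i: "S1 i = 0" using zero1[OF iI S0i] .
  have Sbi: "Sb i = (if i < n then Y0 (Suc i) else 0)" using L[OF iI] S0i S1i by simp
  have Sbp: "Sb i > 0" using tots iI by blast
  show False
  proof (cases "i < n")
    case True
    have jI: "Suc i \<in> {1..n}" using True by auto
    have "lm (Suc i) * F (Suc i) * S1 (Suc i) = 0" using L[OF jI] S1i by simp
    hence "S1 (Suc i) = 0" using posi[of "Suc i"] Fpos[OF jI] jI by auto
    hence "Y0 (Suc i) = 0" using L[OF jI] by simp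
    thus False using Sbi True Sbp by auto
  next
    case False thus False using Sbi Sbp by auto
  qed
qed

lemma unique:
  assumes B: "BMSS n a0 b0 c0 a1 b1 c1 Fb Sb Eb S0 S1 F Y0 Y1"
  shows "ok n (S1 n) \<and> Eb = X n (S1 n) + Y n (S1 n)"
proof -
  define s where "s = S1 n"
  have L: "\<And>j. j \<in> {1..n} \<Longrightarrow> Y0 j = gm j * F j * S1 j \<and> Y1 j = dl j * F j * S1 j \<and>
        lm j * F j * S1 j = S0 j * S1 (j - 1) \<and> Fb j = F j + Y1 j \<and>
        Sb j = S0 j + S1 j + Y0 j + Y1 j + (if j < n then Y0 (Suc j) else 0)"
    and N: "\<And>j. j \<in> {1..n} \<Longrightarrow> S0 j \<ge> 0 \<and> S1 j \<ge> 0 \<and> F j \<ge> 0 \<and> Y0 j \<ge> 0 \<and> Y1 j \<ge> 0"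
    and EbE: "Eb = S1 0 + Y0 1"
    using B unfolding BMSS_def steady_state_def by blast+
  have ind: "k \<le> n \<Longrightarrow> ok k s \<and> S1 (n - k) = X k s \<and> Y k s = (if k = 0 then 0 else Y0 (n - k + 1))" for k
  proof (induction k)
    case 0
    have "S1 n \<ge> 0" using N[of n] n1 by auto
    thus ?case by (simp add: ok_def s_def)
  next
    case (Suc k)
    define i where "i = n - k"
    have i: "1 \<le> i" "i \<le> n" using Suc.prems by (auto simp: i_def)
    have iI: "i \<in> {1..n}" using i by auto
    note ps = posi[OF i]
    have IH: "ok k s" "S1 i = X k s" "Y k s = (if k = 0 then 0 else Y0 (n - k + 1))"
      using Suc unfolding i_def by auto
    have yk: "Y k s = (if i < n then Y0 (Suc i) else 0)"
      using IH(3) Suc.prems unfolding i_def by (cases k) auto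
    have xnn: "X k s \<ge> 0" using N[OF iI] IH(2) by simp
    define E where "E = 1 + dl i * X k s"
    have E: "E > 0" unfolding E_def using ps xnn by (simp add: add_pos_nonneg)
    have Fi: "F i = Fb i / E"
    proof -
      have "Fb i = F i * E" using L[OF iI] IH(2) unfolding E_def by (simp add: algebra_simps)
      thus ?thesis using E by simp
    qed
    have S0i: "S0 i = S0r i (X k s) (Y k s)"
    proof -
      have "S0 i = Sb i - X k s - gm i * F i * X k s - dl i * F i * X k s - Y k s"
        using L[OF iI] IH(2) yk by simp
      also have "\<dots> = S0r i (X k s) (Y k s)" by (rule S0alg[OF i xnn]) (simp add: Fi E_def)
      finally show ?thesis .
    qed
    have S0p: "S0 i > 0" using S0pos[OF B i] .
    have drE: "dr i (X k s) (Y k s) = E * S0 i" using dr_eq[of i "X k s"] E S0i unfolding E_def by simp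
    have dpos: "dr i (X k s) (Y k s) > 0" using drE E S0p by simp
    have okS: "ok (Suc k) s" using ok_Suc[of k s] IH(1) dpos unfolding i_def by simp
    have idx: "n - Suc k = i - 1" "n - Suc k + 1 = i" using Suc.prems unfolding i_def by auto
    have X1: "S1 (i - 1) = X (Suc k) s"
    proof -
      have "lm i * F i * S1 i = S0 i * S1 (i - 1)" using L[OF iI] by blast
      hence "S1 (i - 1) = lm i * F i * X k s / S0 i" using S0p IH(2) by (simp add: field_simps)
      also have "\<dots> = lm i * Fb i * X k s / dr i (X k s) (Y k s)" unfolding drE Fi using E S0p by (simp add: field_simps)
      also have "\<dots> = X (Suc k) s" unfolding XS i_def ..
      finally show ?thesis .
    qed
    have Y1': "Y (Suc k) s = Y0 i"
    proof -
      have "Y (Suc k) s = gYr i (X k s)" unfolding YS i_def ..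
      also have "\<dots> = Y0 i" unfolding gYr_def using L[OF iI] IH(2) Fi E unfolding E_def by simp
      finally show ?thesis .
    qed
    show ?case using okS X1 Y1' idx by simp
  qed
  have "ok n s \<and> S1 0 = X n s \<and> Y n s = Y0 1" using ind[of n] n1 by auto
  thus ?thesis using EbE s_def by simp
qed

end


lemma lim_top:
  fixes f :: "real \<Rightarrow> real"
  assumes "\<sigma> > 0" "mono_on {0..<\<sigma>} f" "\<And>M. \<exists>s\<in>{0..<\<sigma>}. f s > M"
  shows "filterlim f at_top (at_left \<sigma>)"
  unfolding filterlim_at_top
proof
  fix Z
  obtain s0 where s0: "s0 \<in> {0..<\<sigma>}" "f s0 > Z" using assms(3) by blast
  have "eventually (\<lambda>x. x \<in> {s0<..<\<sigma>}) (at_left \<sigma>)" using s0 by (intro eventually_at_left_real) auto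
  thus "eventually (\<lambda>x. Z \<le> f x) (at_left \<sigma>)"
  proof (rule eventually_mono)
    fix x assume x: "x \<in> {s0<..<\<sigma>}"
    have "f s0 \<le> f x" using mono_onD[OF assms(2) s0(1), of x] x s0 by auto
    thus "Z \<le> f x" using s0 by simp
  qed
qed

lemma pole:
  assumes "filterlim (reval q) at_top (at_left \<sigma>)"
  shows "poly (rden q) \<sigma> = 0"
proof (rule ccontr)
  assume "poly (rden q) \<sigma> \<noteq> 0"
  hence "good q \<sigma>" by (simp add: good_def)
  hence "(reval q \<longlongrightarrow> reval q \<sigma>) (at \<sigma>)" using good_isCont isCont_def by blast
  hence "(reval q \<longlongrightarrow> reval q \<sigma>) (at_left \<sigma>)" by (rule tendsto_mono[OF at_le[OF subset_UNIV]])
  thus False using not_tendsto_and_filterlim_at_infinity[of "at_left \<sigma>" "reval q" "reval q \<sigma>"]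
    filterlim_at_top_imp_at_infinity[OF assms] trivial_limit_at_left_real by blast
qed

context cascade begin

lemma main:
  "\<exists>\<sigma>.
     smallest_pos_zero (rden (rfun n a0 b0 c0 a1 b1 c1 Fb Sb)) \<sigma> \<and>
     smallest_pos_zero (rden (f0 n a0 b0 c0 a1 b1 c1 Fb Sb)) \<sigma> \<and>
     continuous_on {0..<\<sigma>} (reval (rfun n a0 b0 c0 a1 b1 c1 Fb Sb)) \<and>
     strict_mono_on {0..<\<sigma>} (reval (rfun n a0 b0 c0 a1 b1 c1 Fb Sb)) \<and>
     reval (rfun n a0 b0 c0 a1 b1 c1 Fb Sb) 0 = 0 \<and>
     filterlim (reval (rfun n a0 b0 c0 a1 b1 c1 Fb Sb)) at_top (at_left \<sigma>) \<and>
     (\<forall>Eb::real. Eb > 0 \<longrightarrow>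
        (\<exists>s. 0 \<le> s \<and> s < \<sigma> \<and> reval (rfun n a0 b0 c0 a1 b1 c1 Fb Sb) s = Eb \<and>
             (\<forall>t. 0 \<le> t \<and> t < \<sigma> \<and> reval (rfun n a0 b0 c0 a1 b1 c1 Fb Sb) t = Eb \<longrightarrow> t = s) \<and>
             (\<exists>S0 S1 F Y0 Y1. BMSS n a0 b0 c0 a1 b1 c1 Fb Sb Eb S0 S1 F Y0 Y1) \<and>
             (\<forall>S0 S1 F Y0 Y1. BMSS n a0 b0 c0 a1 b1 c1 Fb Sb Eb S0 S1 F Y0 Y1 \<longrightarrow> S1 n = s)))"
proof -
  obtain \<sigma> where \<sigma>: "\<sigma> > 0" "I n = {0..<\<sigma>}" using sigma_ex by blast
  have Pn: "P n" using Pall by simp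
  have okI: "ok n t \<longleftrightarrow> t \<in> {0..<\<sigma>}" for t using \<sigma>(2) by (auto simp: I_def set_eq_iff)
  from Pn have cX: "continuous_on {0..<\<sigma>} (X n)" and cY: "continuous_on {0..<\<sigma>} (Y n)"
    and mX: "strict_mono_on {0..<\<sigma>} (X n)" and mY: "mono_on {0..<\<sigma>} (Y n)"
    and X00: "X n 0 = 0" and Y00: "Y n 0 = 0" and unb: "\<And>M. \<exists>s\<in>{0..<\<sigma>}. X n s > M"
    unfolding P_def \<sigma>(2) by blast+
  define rf where "rf = rfun n a0 b0 c0 a1 b1 c1 Fb Sb"
  define ff where "ff = f0 n a0 b0 c0 a1 b1 c1 Fb Sb"
  have rf_eq: "rf = fst (FP n) + snd (FP n)" unfolding rf_def rfun_def ..
  have ff_eq: "ff = fst (FP n)" unfolding ff_def f0_def ..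
  define R where "R t = X n t + Y n t" for t
  have lk: "good (fst (FP n)) t \<and> good (snd (FP n)) t \<and> reval (fst (FP n)) t = X n t \<and> reval (snd (FP n)) t = Y n t"
    if "t \<in> {0..<\<sigma>}" for t using link[of n t] okI that by simp
  have gR: "good rf t \<and> reval rf t = R t" if "t \<in> {0..<\<sigma>}" for t
    using lk[OF that] good_add[of "fst (FP n)" t "snd (FP n)"] unfolding rf_eq R_def by simp
  have gF: "good ff t \<and> reval ff t = X n t" if "t \<in> {0..<\<sigma>}" for t
    using lk[OF that] unfolding ff_eq by simp
  have Ynn: "Y n t \<ge> 0" if "t \<in> {0..<\<sigma>}" for t using nonneg[of n t] okI that by simp
  have mR: "strict_mono_on {0..<\<sigma>} R"
  proof (rule strict_mono_onI)
    fix r s assume "r \<in> {0..<\<sigma>}" "s \<in> {0..<\<sigma>}" "r < s"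
    thus "R r < R s" unfolding R_def using strict_mono_onD[OF mX] mono_onD[OF mY, of r s] by force
  qed
  have cR: "continuous_on {0..<\<sigma>} R" unfolding R_def by (intro continuous_intros cX cY)
  have unbR: "\<exists>s\<in>{0..<\<sigma>}. R s > M" for M
  proof -
    obtain s where "s \<in> {0..<\<sigma>}" "X n s > M" using unb by blast
    thus ?thesis using Ynn[of s] unfolding R_def by (intro bexI[of _ s]) auto
  qed
  have R0: "R 0 = 0" unfolding R_def X00 Y00 by simp
  have ev: "eventually (\<lambda>x. x \<in> {0<..<\<sigma>}) (at_left \<sigma>)" using \<sigma>(1) by (rule eventually_at_left_real)
  have limR: "filterlim R at_top (at_left \<sigma>)"
    by (rule lim_top[OF \<sigma>(1) strict_mono_on_imp_mono_on[OF mR] unbR])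
  have limX: "filterlim (X n) at_top (at_left \<sigma>)"
    by (rule lim_top[OF \<sigma>(1) strict_mono_on_imp_mono_on[OF mX] unb])
  have e1: "eventually (\<lambda>x. reval rf x = R x) (at_left \<sigma>)"
    by (rule eventually_mono[OF ev]) (use gR in auto)
  have e2: "eventually (\<lambda>x. reval ff x = X n x) (at_left \<sigma>)"
    by (rule eventually_mono[OF ev]) (use gF in auto)
  have limrf: "filterlim (reval rf) at_top (at_left \<sigma>)"
    using limR filterlim_cong[OF refl refl e1] by simp
  have limff: "filterlim (reval ff) at_top (at_left \<sigma>)"
    using limX filterlim_cong[OF refl refl e2] by simp
  have spz_rf: "smallest_pos_zero (rden rf) \<sigma>"
    unfolding smallest_pos_zero_def
  proof (intro conjI allI impI)
    fix t assume "0 < t \<and> t < \<sigma>" thus "poly (rden rf) t \<noteq> 0" using gR[of t] by (simp add: good_def)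
  qed (use \<sigma>(1) pole[OF limrf] in auto)
  have spz_ff: "smallest_pos_zero (rden ff) \<sigma>"
    unfolding smallest_pos_zero_def
  proof (intro conjI allI impI)
    fix t assume "0 < t \<and> t < \<sigma>" thus "poly (rden ff) t \<noteq> 0" using gF[of t] by (simp add: good_def)
  qed (use \<sigma>(1) pole[OF limff] in auto)
  have crf: "continuous_on {0..<\<sigma>} (reval rf)" by (rule good_cont) (use gR in blast)
  have mrf: "strict_mono_on {0..<\<sigma>} (reval rf)"
  proof (rule strict_mono_onI)
    fix r s assume a: "r \<in> {0..<\<sigma>}" "s \<in> {0..<\<sigma>}" "r < s"
    have "R r < R s" by (rule strict_mono_onD[OF mR a])
    thus "reval rf r < reval rf s" using gR[OF a(1)] gR[OF a(2)] by simp
  qed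
  have rf0: "reval rf 0 = 0" using gR[of 0] R0 \<sigma>(1) by simp
  have Epart: "\<exists>s. 0 \<le> s \<and> s < \<sigma> \<and> reval rf s = Eb \<and>
             (\<forall>t. 0 \<le> t \<and> t < \<sigma> \<and> reval rf t = Eb \<longrightarrow> t = s) \<and>
             (\<exists>S0 S1 F Y0 Y1. BMSS n a0 b0 c0 a1 b1 c1 Fb Sb Eb S0 S1 F Y0 Y1) \<and>
             (\<forall>S0 S1 F Y0 Y1. BMSS n a0 b0 c0 a1 b1 c1 Fb Sb Eb S0 S1 F Y0 Y1 \<longrightarrow> S1 n = s)"
    if Eb: "Eb > 0" for Eb
  proof -
    obtain s1 where s1: "s1 \<in> {0..<\<sigma>}" "R s1 > Eb" using unbR by blast
    have "\<exists>x. 0 \<le> x \<and> x \<le> s1 \<and> R x = Eb"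
      using s1 Eb R0 by (intro IVT') (auto intro: continuous_on_subset[OF cR])
    then obtain s where s: "0 \<le> s" "s \<le> s1" "R s = Eb" by blast
    have sI: "s \<in> {0..<\<sigma>}" using s s1 by auto
    have injR: "t = s" if "t \<in> {0..<\<sigma>}" "R t = Eb" for t
    proof (rule ccontr)
      assume "t \<noteq> s"
      hence "t < s \<or> s < t" by auto
      thus False using strict_mono_onD[OF mR that(1) sI] strict_mono_onD[OF mR sI that(1)] that(2) s(3) by auto
    qed
    have ex: "\<exists>S0 S1 F Y0 Y1. BMSS n a0 b0 c0 a1 b1 c1 Fb Sb Eb S0 S1 F Y0 Y1"
      using construct[of s Eb] okI sI s(3) Eb unfolding R_def by simp
    have un: "S1 n = s" if "BMSS n a0 b0 c0 a1 b1 c1 Fb Sb Eb S0 S1 F Y0 Y1" for S0 S1 F Y0 Y1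
    proof -
      have "ok n (S1 n) \<and> Eb = R (S1 n)" using unique[OF that] unfolding R_def by simp
      thus ?thesis using okI injR by blast
    qed
    have u2: "\<forall>t. 0 \<le> t \<and> t < \<sigma> \<and> reval rf t = Eb \<longrightarrow> t = s"
    proof (intro allI impI)
      fix t assume t: "0 \<le> t \<and> t < \<sigma> \<and> reval rf t = Eb"
      hence tI: "t \<in> {0..<\<sigma>}" by simp
      show "t = s" using injR[OF tI] gR[OF tI] t by simp
    qed
    have "reval rf s = Eb" using gR[OF sI] s(3) by simp
    thus ?thesis using sI u2 ex un by auto
  qed
  show ?thesis unfolding rf_def[symmetric] ff_def[symmetric]
    using spz_rf spz_ff crf mrf rf0 limrf Epart by blast
qed

end

theorem mainTheorem9:
  fixes n :: nat and a0 b0 c0 a1 b1 c1 Fb Sb :: "nat \<Rightarrow> real"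
  assumes "n \<ge> 1"
    and "\<forall>i\<in>{1..n}. a0 i > 0 \<and> b0 i > 0 \<and> c0 i > 0 \<and> a1 i > 0 \<and> b1 i > 0 \<and> c1 i > 0"
    and "\<forall>i\<in>{1..n}. Fb i > 0 \<and> Sb i > 0"
  shows "\<exists>\<sigma>.
     smallest_pos_zero (rden (rfun n a0 b0 c0 a1 b1 c1 Fb Sb)) \<sigma> \<and>
     smallest_pos_zero (rden (f0 n a0 b0 c0 a1 b1 c1 Fb Sb)) \<sigma> \<and>
     continuous_on {0..<\<sigma>} (reval (rfun n a0 b0 c0 a1 b1 c1 Fb Sb)) \<and>
     strict_mono_on {0..<\<sigma>} (reval (rfun n a0 b0 c0 a1 b1 c1 Fb Sb)) \<and>
     reval (rfun n a0 b0 c0 a1 b1 c1 Fb Sb) 0 = 0 \<and>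
     filterlim (reval (rfun n a0 b0 c0 a1 b1 c1 Fb Sb)) at_top (at_left \<sigma>) \<and>
     (\<forall>Eb::real. Eb > 0 \<longrightarrow>
        (\<exists>s. 0 \<le> s \<and> s < \<sigma> \<and> reval (rfun n a0 b0 c0 a1 b1 c1 Fb Sb) s = Eb \<and>
             (\<forall>t. 0 \<le> t \<and> t < \<sigma> \<and> reval (rfun n a0 b0 c0 a1 b1 c1 Fb Sb) t = Eb \<longrightarrow> t = s) \<and>
             (\<exists>S0 S1 F Y0 Y1. BMSS n a0 b0 c0 a1 b1 c1 Fb Sb Eb S0 S1 F Y0 Y1) \<and>
             (\<forall>S0 S1 F Y0 Y1. BMSS n a0 b0 c0 a1 b1 c1 Fb Sb Eb S0 S1 F Y0 Y1 \<longrightarrow> S1 n = s)))"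
proof -
  interpret cascade n a0 b0 c0 a1 b1 c1 Fb Sb using assms by unfold_locales
  show ?thesis by (rule main)
qed


end
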